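(* Let $\alpha\ge0$ be a constant and $\eta_{\min}\in(0,1)$. For any $\delta\in(0,1)$, if an auditing algorithm $(\alpha,\delta)$-learns, with respect to $\mathcal{H}_{\dashv}$, every distribution $D$ over $[0,1]\times\{-1,+1\}$ with $\mathrm{err}(D,\mathcal{H}_{\dashv})\ge\eta_{\min}$, then the auditing complexity of the algorithm (in the worst case over such distributions) is $\Omega\big(\ln(\tfrac{1-\delta}{\delta})\ln(1/\eta_{\min})\big)$, where the hidden constants depend only on $\alpha$.
   Context: Setting: an algorithm may draw i.i.d. pairs $(X,Y)\sim D$; it sees $X$ but $Y$ is hidden until queried. The auditing complexity is the number of queries on points with label $-1$. An algorithm $(\alpha,\delta)$-learns $D$ with respect to $\mathcal{H}$ if with probability at least $1-\delta$ the returned $\hat h$ satisfies $\mathrm{err}(D,\hat h)\le(1+\alpha)\mathrm{err}(D,\mathcal{H})$, where $\mathrm{err}(D,h)=\Pr_{(X,Y)\sim D}[h(X)\ne Y]$ and $\mathrm{err}(D,\mathcal{H})=\min_{h\in\mathcal{H}}\mathrm{err}(D,h)$. For $a\in[0,1]$, $h_a(x)=+1$ if $x\ge a$ and $-1$ otherwise; $\mathcal{H}_{\dashv}=\{h_a:a\in[0,1]\}$. *)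

theory Defs
  imports "HOL-Probability.Probability"
begin

text \<open>Labels: True encodes +1, False encodes -1. A labelled example is a pair (x, y).\<close>

definition thr :: "real \<Rightarrow> real \<Rightarrow> bool" where
  "thr a x = (a \<le> x)"

definition valid_dist :: "(real \<times> bool) measure \<Rightarrow> bool" where
  "valid_dist D \<longleftrightarrow> prob_space D \<and>
     sets D = sets (borel \<Otimes>\<^sub>M count_space UNIV) \<and>
     (AE z in D. fst z \<in> {0..1})"

definition err :: "(real \<times> bool) measure \<Rightarrow> (real \<Rightarrow> bool) \<Rightarrow> real" where
  "err D h = measure D {z. h (fst z) \<noteq> snd z}"

definition err_H :: "(real \<times> bool) measure \<Rightarrow> real" where
  "err_H D = (INF a\<in>{0..1}. err D (thr a))"

text \<open>A (randomized) auditing algorithm. It has a random seed u (uniform on [0,1]) and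
  sees the unlabelled stream xs of i.i.d. draws. Given the history of answered queries
  (index, revealed label), it either asks for the label of some index (Some i) or stops
  (None); on stopping it outputs a threshold a (hypothesis thr a).\<close>
record auditor =
  nxt :: "real \<Rightarrow> (nat \<Rightarrow> real) \<Rightarrow> (nat \<times> bool) list \<Rightarrow> nat option"
  outp :: "real \<Rightarrow> (nat \<Rightarrow> real) \<Rightarrow> (nat \<times> bool) list \<Rightarrow> real"

primrec hist :: "auditor \<Rightarrow> real \<Rightarrow> (nat \<Rightarrow> real) \<Rightarrow> (nat \<Rightarrow> bool) \<Rightarrow> nat \<Rightarrow> (nat \<times> bool) list" where
  "hist A u xs ys 0 = []"
| "hist A u xs ys (Suc k) =
     (case nxt A u xs (hist A u xs ys k) of
        None \<Rightarrow> hist A u xs ys k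
      | Some i \<Rightarrow> hist A u xs ys k @ [(i, ys i)])"

definition terminates :: "auditor \<Rightarrow> real \<Rightarrow> (nat \<Rightarrow> real) \<Rightarrow> (nat \<Rightarrow> bool) \<Rightarrow> bool" where
  "terminates A u xs ys \<longleftrightarrow> (\<exists>k. nxt A u xs (hist A u xs ys k) = None)"

definition final_hist :: "auditor \<Rightarrow> real \<Rightarrow> (nat \<Rightarrow> real) \<Rightarrow> (nat \<Rightarrow> bool) \<Rightarrow> (nat \<times> bool) list" where
  "final_hist A u xs ys = hist A u xs ys (LEAST k. nxt A u xs (hist A u xs ys k) = None)"

text \<open>Number of queries on points with label -1 (possibly infinite if the run never stops).\<close>
definition audit_cost :: "auditor \<Rightarrow> real \<Rightarrow> (nat \<Rightarrow> real) \<Rightarrow> (nat \<Rightarrow> bool) \<Rightarrow> ennreal" where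
  "audit_cost A u xs ys = (SUP k. ennreal (real (length (filter (\<lambda>p. \<not> snd p) (hist A u xs ys k)))))"

definition run_space :: "(real \<times> bool) measure \<Rightarrow> (real \<times> (nat \<Rightarrow> real \<times> bool)) measure" where
  "run_space D = uniform_measure lborel {0..1} \<Otimes>\<^sub>M PiM UNIV (\<lambda>_. D)"

definition learns :: "real \<Rightarrow> real \<Rightarrow> auditor \<Rightarrow> (real \<times> bool) measure \<Rightarrow> bool" where
  "learns \<alpha> \<delta> A D \<longleftrightarrow>
     measure (run_space D)
       {(u, \<omega>). terminates A u (fst \<circ> \<omega>) (snd \<circ> \<omega>) \<and>
          (let a = outp A u (fst \<circ> \<omega>) (final_hist A u (fst \<circ> \<omega>) (snd \<circ> \<omega>))
           in a \<in> {0..1} \<and> err D (thr a) \<le> (1 + \<alpha>) * err_H D)} \<ge> 1 - \<delta>"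

definition expected_audit_cost :: "auditor \<Rightarrow> (real \<times> bool) measure \<Rightarrow> ennreal" where
  "expected_audit_cost A D =
     (\<integral>\<^sup>+ (u, \<omega>). audit_cost A u (fst \<circ> \<omega>) (snd \<circ> \<omega>) \<partial>run_space D)"

end

theory Submission
  imports Defs
begin

lemma space_bc[simp]: "space (borel \<Otimes>\<^sub>M count_space UNIV :: (real \<times> bool) measure) = UNIV"
  by (simp add: space_pair_measure)

lemma sets_bc_pred:
  assumes "Measurable.pred (borel \<Otimes>\<^sub>M count_space UNIV :: (real \<times> bool) measure) P"
  shows "{z. P z} \<in> sets (borel \<Otimes>\<^sub>M count_space UNIV)"
proof -
  have "{z. P z} = {z \<in> space (borel \<Otimes>\<^sub>M count_space UNIV :: (real \<times> bool) measure). P z}" by simp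
  also have "\<dots> \<in> sets (borel \<Otimes>\<^sub>M count_space UNIV)" using assms by measurable
  finally show ?thesis .
qed

lemma err_set_meas: "{z::real\<times>bool. thr a (fst z) \<noteq> snd z} \<in> sets (borel \<Otimes>\<^sub>M count_space UNIV)"
  by (rule sets_bc_pred) (unfold thr_def, measurable)

lemma hist_prefix: "\<exists>t. hist A u xs ys (k + d) = hist A u xs ys k @ t"
proof (induction d)
  case 0 then show ?case by simp
next
  case (Suc d)
  then obtain t where t: "hist A u xs ys (k + d) = hist A u xs ys k @ t" by blast
  show ?case
    by (cases "nxt A u xs (hist A u xs ys (k + d))") (use t in auto)
qed

lemma hist_stop: "nxt A u xs (hist A u xs ys k) = None \<Longrightarrow> hist A u xs ys (k + d) = hist A u xs ys k"
  by (induction d) auto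

lemma hist_labels: "p \<in> set (hist A u xs ys k) \<Longrightarrow> snd p = ys (fst p)"
  by (induction k) (auto split: option.splits)

lemma hist_agree:
  assumes "\<And>k p. p \<in> set (hist A u xs ys k) \<Longrightarrow> ys' (fst p) = ys (fst p)"
  shows "hist A u xs ys' k = hist A u xs ys k"
proof (induction k)
  case 0 then show ?case by simp
next
  case (Suc k)
  show ?case
  proof (cases "nxt A u xs (hist A u xs ys k)")
    case None then show ?thesis using Suc by simp
  next
    case (Some i)
    then have "(i, ys i) \<in> set (hist A u xs ys (Suc k))" by simp
    then have "ys' i = ys i" using assms by fastforce
    then show ?thesis using Suc Some by simp
  qed
qed

lemma hist_sub_final:
  assumes "terminates A u xs ys"
  shows "set (hist A u xs ys k) \<subseteq> set (final_hist A u xs ys)"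
proof -
  define k0 where "k0 = (LEAST k. nxt A u xs (hist A u xs ys k) = None)"
  have k0: "nxt A u xs (hist A u xs ys k0) = None"
    using assms unfolding terminates_def k0_def by (rule LeastI_ex)
  have fh: "final_hist A u xs ys = hist A u xs ys k0" unfolding final_hist_def k0_def ..
  show ?thesis
  proof (cases "k \<le> k0")
    case True
    then obtain d where "k0 = k + d" using le_Suc_ex by blast
    then show ?thesis using hist_prefix[of A u xs ys k d] fh by auto
  next
    case False
    then obtain d where "k = k0 + d" using le_Suc_ex[of k0 k] by auto
    then show ?thesis using hist_stop[OF k0, of d] fh by auto
  qed
qed

lemma run_agree:
  assumes "terminates A u xs ys"
    and "\<And>p. p \<in> set (final_hist A u xs ys) \<Longrightarrow> ys' (fst p) = ys (fst p)"
  shows "terminates A u xs ys' \<and> final_hist A u xs ys' = final_hist A u xs ys"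
proof -
  have "\<And>k. hist A u xs ys' k = hist A u xs ys k"
    by (rule hist_agree) (use hist_sub_final[OF assms(1)] assms(2) in blast)
  then have "hist A u xs ys' = hist A u xs ys" by auto
  then show ?thesis using assms(1) unfolding terminates_def final_hist_def by simp
qed

lemma audit_cost_ge:
  "ennreal (real (length (filter (\<lambda>p. \<not> snd p) (final_hist A u xs ys)))) \<le> audit_cost A u xs ys"
  unfolding audit_cost_def final_hist_def by (rule SUP_upper) auto

lemma coin_prob:
  assumes "finite Q" "0 \<le> r" "r \<le> 1"
  shows "emeasure (PiM UNIV (\<lambda>_. measure_pmf (bernoulli_pmf r))) {c. \<forall>i\<in>Q. c i} = ennreal r ^ card Q"
proof -
  let ?B = "measure_pmf (bernoulli_pmf r)"
  have "{c. \<forall>i\<in>Q. c i} = prod_emb UNIV (\<lambda>_. ?B) Q (Pi\<^sub>E Q (\<lambda>_. {True}))"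
    unfolding prod_emb_def by (auto simp: space_PiM restrict_def fun_eq_iff)
  also have "emeasure (PiM UNIV (\<lambda>_. ?B)) \<dots> = (\<Prod>i\<in>Q. emeasure ?B {True})"
    by (rule emeasure_PiM_emb) (auto simp: assms measure_pmf.prob_space_axioms)
  also have "\<dots> = ennreal r ^ card Q"
    using assms by (simp add: emeasure_pmf_single)
  finally show ?thesis .
qed


lemma PiM_couple:
  fixes M :: "'a measure" and N :: "'b measure" and S :: "'c measure"
  assumes M: "prob_space M" and N: "prob_space N"
    and F[measurable]: "F \<in> measurable (N \<Otimes>\<^sub>M M) S"
  shows "distr (PiM UNIV (\<lambda>_::nat. M) \<Otimes>\<^sub>M PiM UNIV (\<lambda>_::nat. N)) (PiM UNIV (\<lambda>_. distr (N \<Otimes>\<^sub>M M) S F))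
           (\<lambda>(\<omega>,c) i. F (c i, \<omega> i)) = PiM UNIV (\<lambda>_. distr (N \<Otimes>\<^sub>M M) S F)"
    (is "distr ?PP ?PK ?Phi = _")
proof -
  let ?K = "distr (N \<Otimes>\<^sub>M M) S F"
  let ?PM = "PiM UNIV (\<lambda>_::nat. M)" and ?PN = "PiM UNIV (\<lambda>_::nat. N)"
  interpret M: prob_space M by fact
  interpret N: prob_space N by fact
  interpret NM: pair_prob_space N M by unfold_locales
  interpret PM: prob_space ?PM by (rule prob_space_PiM) (rule M)
  interpret PN: prob_space ?PN by (rule prob_space_PiM) (rule N)
  interpret PP: pair_prob_space ?PM ?PN by unfold_locales
  have K: "prob_space ?K" by (rule NM.prob_space_distr) simp
  have setsK[measurable_cong]: "sets ?K = sets S" by simp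
  have Phi[measurable]: "?Phi \<in> measurable ?PP ?PK"
  proof (rule measurable_PiM_single')
    fix i :: nat
    have "(\<lambda>x. (snd x i, fst x i)) \<in> measurable ?PP (N \<Otimes>\<^sub>M M)" by measurable
    then have "(\<lambda>x. F (snd x i, fst x i)) \<in> measurable ?PP S" by measurable
    then show "(\<lambda>x. ?Phi x i) \<in> measurable ?PP ?K"
      by (simp add: case_prod_beta measurable_cong_sets[OF refl setsK])
  qed (auto simp: space_PiM space_pair_measure PiE_iff intro!: measurable_space[OF F])
  show ?thesis
  proof (rule measure_eqI_PiM_infinite)
    show "sets (distr ?PP ?PK ?Phi) = sets ?PK" by simp
    show "sets ?PK = sets ?PK" ..
    show "finite_measure (distr ?PP ?PK ?Phi)"
      by (rule prob_space.finite_measure, rule PP.prob_space_distr, rule Phi)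
  next
    fix A J assume J: "finite J" "J \<subseteq> (UNIV::nat set)" and A: "\<And>i. i \<in> J \<Longrightarrow> A i \<in> sets ?K"
    then have A'[measurable]: "\<And>i. i \<in> J \<Longrightarrow> A i \<in> sets S" by simp
    let ?X = "prod_emb UNIV (\<lambda>_. ?K) J (Pi\<^sub>E J A)"
    define g where "g i b = emeasure M {v \<in> space M. F (b, v) \<in> A i}" for i b
    have Xs: "?X \<in> sets ?PK" using J A by (intro sets_PiM_I) auto
    have g_meas: "g i \<in> borel_measurable N" if "i \<in> J" for i
    proof -
      have "F -` A i \<inter> space (N \<Otimes>\<^sub>M M) \<in> sets (N \<Otimes>\<^sub>M M)" using that by measurable
      then have "(\<lambda>b. emeasure M (Pair b -` (F -` A i \<inter> space (N \<Otimes>\<^sub>M M)))) \<in> borel_measurable N"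
        by (rule M.measurable_emeasure_Pair)
      moreover have "\<And>b. b \<in> space N \<Longrightarrow> Pair b -` (F -` A i \<inter> space (N \<Otimes>\<^sub>M M)) = {v \<in> space M. F (b, v) \<in> A i}"
        by (auto simp: space_pair_measure)
      ultimately show ?thesis unfolding g_def
        by (subst measurable_cong[where g="\<lambda>b. emeasure M (Pair b -` (F -` A i \<inter> space (N \<Otimes>\<^sub>M M)))"]) auto
    qed
    have gK: "(\<integral>\<^sup>+b. g i b \<partial>N) = emeasure ?K (A i)" if "i \<in> J" for i
    proof -
      have "emeasure ?K (A i) = emeasure (N \<Otimes>\<^sub>M M) (F -` A i \<inter> space (N \<Otimes>\<^sub>M M))"
        using that by (subst emeasure_distr) auto
      also have "\<dots> = (\<integral>\<^sup>+b. emeasure M (Pair b -` (F -` A i \<inter> space (N \<Otimes>\<^sub>M M))) \<partial>N)"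
        using that by (intro M.emeasure_pair_measure_alt) measurable
      also have "\<dots> = (\<integral>\<^sup>+b. g i b \<partial>N)"
        unfolding g_def by (intro nn_integral_cong arg_cong2[where f=emeasure]) (auto simp: space_pair_measure)
      finally show ?thesis ..
    qed
    have "emeasure (distr ?PP ?PK ?Phi) ?X = emeasure ?PP (?Phi -` ?X \<inter> space ?PP)"
      using Xs by (rule emeasure_distr[OF Phi])
    also have "\<dots> = (\<integral>\<^sup>+c. emeasure ?PM ((\<lambda>\<omega>. (\<omega>, c)) -` (?Phi -` ?X \<inter> space ?PP)) \<partial>?PN)"
      by (rule PP.emeasure_pair_measure_alt2) (use Xs Phi in measurable)
    also have "\<dots> = (\<integral>\<^sup>+c. (\<Prod>i\<in>J. g i (c i)) \<partial>?PN)"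
    proof (rule nn_integral_cong)
      fix c assume c: "c \<in> space ?PN"
      have "(\<lambda>\<omega>. (\<omega>, c)) -` (?Phi -` ?X \<inter> space ?PP) =
            prod_emb UNIV (\<lambda>_. M) J (Pi\<^sub>E J (\<lambda>i. {v \<in> space M. F (c i, v) \<in> A i}))"
        using c by (auto simp: prod_emb_def space_pair_measure space_PiM PiE_iff intro!: measurable_space[OF F])
      moreover have "emeasure ?PM (prod_emb UNIV (\<lambda>_. M) J (Pi\<^sub>E J (\<lambda>i. {v \<in> space M. F (c i, v) \<in> A i})))
          = (\<Prod>i\<in>J. g i (c i))"
      proof (subst emeasure_PiM_emb)
        show "{v \<in> space M. F (c i, v) \<in> A i} \<in> sets M" if i: "i \<in> J" for i
        proof -
          have ci: "c i \<in> space N" using c by (auto simp: space_PiM)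
          have "(\<lambda>v. F (c i, v)) \<in> measurable M S" using ci by measurable
          from measurable_sets[OF this A'[OF i]] show ?thesis
            by (simp add: vimage_def Int_def conj_commute)
        qed
      qed (use J M in \<open>auto simp: g_def\<close>)
      ultimately show "emeasure ?PM ((\<lambda>\<omega>. (\<omega>, c)) -` (?Phi -` ?X \<inter> space ?PP)) = (\<Prod>i\<in>J. g i (c i))"
        by simp
    qed
    also have "\<dots> = (\<integral>\<^sup>+x. (\<Prod>i\<in>J. g i (x i)) \<partial>distr ?PN (PiM J (\<lambda>_. N)) (\<lambda>x. restrict x J))"
      using J g_meas by (subst nn_integral_distr) (auto intro!: nn_integral_cong)
    also have "distr ?PN (PiM J (\<lambda>_. N)) (\<lambda>x. restrict x J) = PiM J (\<lambda>_. N)"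
    proof -
      interpret PPN: product_prob_space "\<lambda>_::nat. N" UNIV by (rule product_prob_spaceI) (rule N)
      show ?thesis using J by (intro PPN.distr_PiM_restrict_finite) auto
    qed
    also have "(\<integral>\<^sup>+x. (\<Prod>i\<in>J. g i (x i)) \<partial>PiM J (\<lambda>_. N)) = (\<Prod>i\<in>J. \<integral>\<^sup>+b. g i b \<partial>N)"
    proof -
      interpret PS: product_sigma_finite "\<lambda>_::nat. N" by unfold_locales
      show ?thesis using J g_meas by (intro PS.product_nn_integral_prod) auto
    qed
    also have "\<dots> = (\<Prod>i\<in>J. emeasure ?K (A i))" using gK by (intro prod.cong) auto
    also have "\<dots> = emeasure ?PK ?X"
      using J A K by (intro emeasure_PiM_emb[symmetric]) auto
    finally show "emeasure (distr ?PP ?PK ?Phi) ?X = emeasure ?PK ?X" .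
  qed
qed


lemma jensen_part:
  fixes R :: "'a measure" and \<psi> :: "'a \<Rightarrow> real" and n :: "'a \<Rightarrow> nat"
  assumes R: "prob_space R" and E: "E \<in> sets R"
    and \<psi>m: "\<psi> \<in> borel_measurable R" and \<psi>01: "\<And>z. 0 \<le> \<psi> z \<and> \<psi> z \<le> 1"
    and \<psi>int: "integral\<^sup>L R \<psi> \<le> \<delta>" and pE: "measure R E \<ge> 1 - \<delta>"
    and \<delta>: "0 < \<delta>" "\<delta> \<le> 1/2" and r: "0 < r" "r < 1"
    and \<psi>n: "\<And>z. z \<in> E \<Longrightarrow> \<psi> z \<ge> r ^ n z"
  shows "\<exists>g. g \<in> borel_measurable R \<and> (\<forall>z. 0 \<le> g z) \<and> (\<forall>z\<in>E. g z \<le> real (n z)) \<and>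
    (\<integral>\<^sup>+z. indicator E z * ennreal (g z) \<partial>R) \<ge> ennreal ((1-\<delta>) * ln ((1-\<delta>)/\<delta>) / ln (1/r))"
proof -
  interpret R: prob_space R by fact
  define p where "p = measure R E"
  have p1: "p \<le> 1" unfolding p_def by simp
  have p0: "1 - \<delta> \<le> p" using pE unfolding p_def .
  have ppos: "0 < p" using p0 \<delta> by linarith
  define m where "m = \<delta> / p"
  have mpos: "0 < m" unfolding m_def using \<delta> ppos by simp
  define L where "L = ln (1/r)"
  have Lpos: "0 < L" unfolding L_def using r by simp
  define g where "g z = max 0 (1 - ln m - \<psi> z / m) / L" for z
  have gm[measurable]: "g \<in> borel_measurable R" unfolding g_def using \<psi>m by measurable
  have g0: "\<forall>z. 0 \<le> g z" unfolding g_def using Lpos by auto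
  have gn: "g z \<le> real (n z)" if z: "z \<in> E" for z
  proof -
    have rn: "0 < r ^ n z" using r by simp
    have \<psi>pos: "0 < \<psi> z" using \<psi>n[OF z] rn by linarith
    have "ln (\<psi> z / m) \<le> \<psi> z / m - 1" using \<psi>pos mpos by (intro ln_le_minus_one) simp
    then have a: "1 - ln m - \<psi> z / m \<le> - ln (\<psi> z)" using \<psi>pos mpos by (simp add: ln_div)
    have "ln (r ^ n z) \<le> ln (\<psi> z)" using \<psi>n[OF z] rn by simp
    then have "- ln (\<psi> z) \<le> real (n z) * L" using r by (simp add: L_def ln_realpow ln_div)
    with a have "max 0 (1 - ln m - \<psi> z / m) \<le> real (n z) * L" using Lpos by auto
    then show ?thesis unfolding g_def using Lpos by (simp add: divide_le_eq)
  qed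
  define C where "C = 1 + \<bar>ln m\<bar> + 1 / m"
  have gb: "\<bar>g z\<bar> \<le> C / L" for z
  proof -
    have "0 \<le> \<psi> z / m" "0 < 1/m" using \<psi>01[of z] mpos by auto
    note hh = this abs_ge_minus_self[of "ln m"] abs_ge_zero[of "ln m"]
    have "1 - ln m - \<psi> z / m \<le> C" "0 \<le> C" unfolding C_def using hh by linarith+
    then have "max 0 (1 - ln m - \<psi> z / m) \<le> C" by simp
    then show ?thesis unfolding g_def using Lpos by (auto simp: divide_right_mono)
  qed
  have C0: "0 \<le> C/L" using gb[of undefined] by (meson abs_ge_zero order_trans)
  have Em[measurable]: "E \<in> sets R" by (rule E)
  have intg: "integrable R (\<lambda>z. indicator E z * g z)"
  proof (rule R.integrable_const_bound[where B="C/L"])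
    show "AE z in R. norm (indicator E z * g z) \<le> C/L" using gb C0 by (auto simp: indicator_def)
    show "(\<lambda>z. indicator E z * g z) \<in> borel_measurable R" by measurable
  qed
  have int\<psi>: "integrable R \<psi>"
    by (rule R.integrable_const_bound[where B=1]) (use \<psi>01 \<psi>m in auto)
  have int\<psi>E: "integrable R (\<lambda>z. indicator E z * \<psi> z)"
    by (rule R.integrable_const_bound[where B=1]) (use \<psi>01 \<psi>m E in \<open>auto simp: indicator_def\<close>)
  have intE: "integrable R (indicator E :: 'a \<Rightarrow> real)"
    using E by (intro R.integrable_const_bound[where B=1]) (auto simp: indicator_def)
  have "(\<integral>z. indicator E z * \<psi> z \<partial>R) \<le> (\<integral>z. \<psi> z \<partial>R)"
    using int\<psi>E int\<psi> \<psi>01 by (intro integral_mono) (auto simp: indicator_def)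
  then have IE: "(\<integral>z. indicator E z * \<psi> z \<partial>R) \<le> \<delta>" using \<psi>int by linarith
  have int2: "integrable R (\<lambda>z. ((1 - ln m) * indicator E z - (indicator E z * \<psi> z) / m) / L)"
    using int\<psi>E intE by (intro integrable_divide_zero integrable_diff integrable_mult_right) auto
  have "(\<integral>z. indicator E z * g z \<partial>R) \<ge> (\<integral>z. ((1 - ln m) * indicator E z - (indicator E z * \<psi> z) / m) / L \<partial>R)"
    using intg int2 Lpos
    by (intro integral_mono) (auto simp: g_def indicator_def divide_right_mono)
  also have "(\<integral>z. ((1 - ln m) * indicator E z - (indicator E z * \<psi> z) / m) / L \<partial>R)
      = ((1 - ln m) * p - (\<integral>z. indicator E z * \<psi> z \<partial>R) / m) / L"
    using int\<psi>E intE E by (simp add: p_def integral_diff)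
  also have "\<dots> \<ge> ((1 - ln m) * p - \<delta> / m) / L"
    using IE mpos Lpos by (intro divide_right_mono diff_left_mono divide_right_mono) auto
  finally have I1: "(\<integral>z. indicator E z * g z \<partial>R) \<ge> ((1 - ln m) * p - \<delta> / m) / L" .
  have "((1 - ln m) * p - \<delta> / m) = p * ln (p / \<delta>)"
    using ppos \<delta> unfolding m_def by (simp add: ln_div field_simps)
  also have "p * ln (p / \<delta>) \<ge> (1 - \<delta>) * ln ((1 - \<delta>) / \<delta>)"
  proof (rule mult_mono)
    show "ln ((1 - \<delta>) / \<delta>) \<le> ln (p / \<delta>)" using p0 \<delta> by (simp add: divide_right_mono)
    have "1 \<le> (1 - \<delta>) / \<delta>" using \<delta> by (simp add: field_simps)
    then show "0 \<le> ln ((1 - \<delta>) / \<delta>)" by simp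
  qed (use p0 \<delta> in auto)
  finally have I2: "(\<integral>z. indicator E z * g z \<partial>R) \<ge> (1 - \<delta>) * ln ((1 - \<delta>) / \<delta>) / L"
    using I1 Lpos by (meson divide_right_mono less_imp_le order_trans)
  have "(\<integral>\<^sup>+z. indicator E z * ennreal (g z) \<partial>R) = (\<integral>\<^sup>+z. ennreal (indicator E z * g z) \<partial>R)"
    by (intro nn_integral_cong) (auto simp: indicator_def)
  also have "\<dots> = ennreal (\<integral>z. indicator E z * g z \<partial>R)"
    using intg g0 by (intro nn_integral_eq_integral) (auto simp: indicator_def)
  finally have "(\<integral>\<^sup>+z. indicator E z * ennreal (g z) \<partial>R) \<ge> ennreal ((1-\<delta>) * ln ((1-\<delta>)/\<delta>) / ln (1/r))"
    using I2 unfolding L_def by (simp add: ennreal_leI)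
  then show ?thesis using gm g0 gn by blast
qed


definition goodset :: "real \<Rightarrow> auditor \<Rightarrow> (real \<times> bool) measure \<Rightarrow> (real \<times> (nat \<Rightarrow> real \<times> bool)) set" where
  "goodset \<alpha> A D = {(u, \<omega>). terminates A u (fst \<circ> \<omega>) (snd \<circ> \<omega>) \<and>
          (let a = outp A u (fst \<circ> \<omega>) (final_hist A u (fst \<circ> \<omega>) (snd \<circ> \<omega>))
           in a \<in> {0..1} \<and> err D (thr a) \<le> (1 + \<alpha>) * err_H D)}"

lemma learns_iff: "learns \<alpha> \<delta> A D \<longleftrightarrow> measure (run_space D) (goodset \<alpha> A D) \<ge> 1 - \<delta>"
  unfolding learns_def goodset_def ..

definition negcnt :: "auditor \<Rightarrow> real \<Rightarrow> real \<times> (nat \<Rightarrow> real \<times> bool) \<Rightarrow> nat" where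
  "negcnt A p z = (case z of (u, \<omega>) \<Rightarrow>
     length (filter (\<lambda>q. \<not> snd q \<and> fst (\<omega> (fst q)) = p) (final_hist A u (fst \<circ> \<omega>) (snd \<circ> \<omega>))))"

lemma space_U[simp]: "space (uniform_measure lborel {0..1::real}) = UNIV" by simp

lemma prob_U: "prob_space (uniform_measure lborel {0..1::real})"
  by (rule prob_space_uniform_measure) auto

lemma core:
  fixes D0 :: "(real \<times> bool) measure" and p r \<alpha> \<delta> :: real
  assumes D0: "prob_space D0" "sets D0 = sets (borel \<Otimes>\<^sub>M count_space UNIV)"
    and r: "0 < r" "r < 1"
    and Dj: "Dj = distr (measure_pmf (bernoulli_pmf r) \<Otimes>\<^sub>M D0) (borel \<Otimes>\<^sub>M count_space UNIV)
                   (\<lambda>(b,(x,y)). (x, y \<or> (\<not> b \<and> x = p)))"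
    and L0: "learns \<alpha> \<delta> A D0" and Lj: "learns \<alpha> \<delta> A Dj"
    and disj: "\<And>a. a \<in> {0..1} \<Longrightarrow> err D0 (thr a) \<le> (1+\<alpha>) * err_H D0 \<Longrightarrow>
                   err Dj (thr a) \<le> (1+\<alpha>) * err_H Dj \<Longrightarrow> False"
    and \<delta>: "0 < \<delta>" "\<delta> \<le> 1/2"
  shows "\<exists>g. g \<in> borel_measurable (run_space D0) \<and> (\<forall>z. 0 \<le> g z) \<and>
     (\<forall>z\<in>goodset \<alpha> A D0. g z \<le> real (negcnt A p z)) \<and>
     (\<integral>\<^sup>+z. indicator (goodset \<alpha> A D0) z * ennreal (g z) \<partial>run_space D0)
        \<ge> ennreal ((1-\<delta>) * ln ((1-\<delta>)/\<delta>) / ln (1/r))"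
proof -
  let ?B = "measure_pmf (bernoulli_pmf r)"
  let ?U = "uniform_measure lborel {0..1::real}"
  let ?S = "borel \<Otimes>\<^sub>M count_space UNIV :: (real \<times> bool) measure"
  define F where "F = (\<lambda>(b,(x,y)). (x, y \<or> (\<not> b \<and> x = p)))"
  let ?PM = "PiM UNIV (\<lambda>_::nat. D0)" and ?PN = "PiM UNIV (\<lambda>_::nat. ?B)" and ?PK = "PiM UNIV (\<lambda>_::nat. Dj)"
  define Phi where "Phi = (\<lambda>(\<omega>,c) (i::nat). F (c i, \<omega> i))"
  define E where "E = goodset \<alpha> A D0"
  define Ej where "Ej = goodset \<alpha> A Dj"
  let ?R = "run_space D0" and ?Rj = "run_space Dj"
  have R_def: "?R = ?U \<Otimes>\<^sub>M ?PM" and Rj_def: "?Rj = ?U \<Otimes>\<^sub>M ?PK" unfolding run_space_def by simp_all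
  interpret D0: prob_space D0 by fact
  interpret B: prob_space ?B by (rule measure_pmf.prob_space_axioms)
  interpret U: prob_space ?U by (rule prob_U)
  have setsB[measurable_cong]: "sets ?B = sets (count_space UNIV)" by simp
  have setsD0[measurable_cong]: "sets D0 = sets ?S" by fact
  have Fm[measurable]: "F \<in> measurable (?B \<Otimes>\<^sub>M D0) ?S" unfolding F_def by measurable
  have Dj': "Dj = distr (?B \<Otimes>\<^sub>M D0) ?S F" unfolding Dj F_def ..
  have couple: "distr (?PM \<Otimes>\<^sub>M ?PN) ?PK Phi = ?PK"
    unfolding Dj' Phi_def by (rule PiM_couple[OF D0(1) measure_pmf.prob_space_axioms Fm])
  interpret BD: pair_prob_space ?B D0 by unfold_locales
  have Djp: "prob_space Dj" unfolding Dj' by (rule BD.prob_space_distr) (rule Fm)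
  interpret Dj: prob_space Dj by (rule Djp)
  interpret PM: prob_space ?PM by (rule prob_space_PiM) (rule D0(1))
  interpret PN: prob_space ?PN by (rule prob_space_PiM) (rule measure_pmf.prob_space_axioms)
  interpret PK: prob_space ?PK by (rule prob_space_PiM) (rule Djp)
  interpret MN: pair_prob_space ?PM ?PN by unfold_locales
  interpret UM: pair_prob_space ?U ?PM by unfold_locales
  interpret UK: pair_prob_space ?U ?PK by unfold_locales
  interpret R: prob_space ?R unfolding R_def by unfold_locales
  interpret Rj: prob_space ?Rj unfolding Rj_def by unfold_locales
  interpret RN: pair_prob_space ?R ?PN by unfold_locales
  have setsDj: "sets Dj = sets ?S" unfolding Dj' by simp
  have spDj[simp]: "space Dj = UNIV" using sets_eq_imp_space_eq[OF setsDj] by simp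
  have spD0[simp]: "space D0 = UNIV" using sets_eq_imp_space_eq[OF setsD0] by simp
  have setsPK: "sets ?PK = sets ?PM" by (rule sets_PiM_cong) (simp_all add: setsDj setsD0)
  have setsRj: "sets ?Rj = sets ?R" unfolding R_def Rj_def
    by (rule sets_pair_measure_cong) (auto simp: setsPK)
  have Phim[measurable]: "Phi \<in> measurable (?PM \<Otimes>\<^sub>M ?PN) ?PK"
  proof (rule measurable_PiM_single')
    fix i :: nat
    have "(\<lambda>x. (snd x i, fst x i)) \<in> measurable (?PM \<Otimes>\<^sub>M ?PN) (?B \<Otimes>\<^sub>M D0)" by measurable
    then have "(\<lambda>x. F (snd x i, fst x i)) \<in> measurable (?PM \<Otimes>\<^sub>M ?PN) ?S" by measurable
    then show "(\<lambda>x. Phi x i) \<in> measurable (?PM \<Otimes>\<^sub>M ?PN) Dj"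
      by (simp add: Phi_def case_prod_beta measurable_cong_sets[OF refl setsDj])
  qed (auto simp: space_PiM space_pair_measure PiE_iff Phi_def F_def split: prod.splits)
  have spPM[simp]: "space ?PM = UNIV" by (auto simp: space_PiM)
  have spPN[simp]: "space ?PN = UNIV" by (auto simp: space_PiM)
  have spPK[simp]: "space ?PK = UNIV" by (auto simp: space_PiM)
  have spR[simp]: "space ?R = UNIV" unfolding R_def by (simp add: space_pair_measure)
  have spRj[simp]: "space ?Rj = UNIV" unfolding Rj_def by (simp add: space_pair_measure)
  have pE: "measure ?R E \<ge> 1 - \<delta>" using L0 unfolding learns_iff E_def .
  have pEj: "measure ?Rj Ej \<ge> 1 - \<delta>" using Lj unfolding learns_iff Ej_def .
  have Em[measurable]: "E \<in> sets ?R"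
  proof (rule ccontr)
    assume "E \<notin> sets ?R" then have "measure ?R E = 0" by (rule measure_notin_sets)
    with pE \<delta> show False by simp
  qed
  have Ejm: "Ej \<in> sets ?Rj"
  proof (rule ccontr)
    assume "Ej \<notin> sets ?Rj" then have "measure ?Rj Ej = 0" by (rule measure_notin_sets)
    with pEj \<delta> show False by simp
  qed
  have Em': "E \<in> sets ?Rj" using Em setsRj by simp
  have disjE: "E \<inter> Ej = {}"
  proof (rule ccontr)
    assume "E \<inter> Ej \<noteq> {}"
    then obtain u \<omega> where "(u, \<omega>) \<in> E" "(u, \<omega>) \<in> Ej" by auto
    then show False unfolding E_def Ej_def goodset_def Let_def using disj by auto
  qed
  have mE: "measure ?Rj E \<le> \<delta>"
  proof -
    have "measure ?Rj E + measure ?Rj Ej = measure ?Rj (E \<union> Ej)"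
      using disjE Em' Ejm by (intro Rj.finite_measure_Union[symmetric]) auto
    also have "\<dots> \<le> 1" by (rule Rj.prob_le_1)
    finally show ?thesis using pEj by linarith
  qed
  define Theta where "Theta = (\<lambda>w::(real \<times> (nat \<Rightarrow> real \<times> bool)) \<times> (nat \<Rightarrow> bool). (fst (fst w), Phi (snd (fst w), snd w)))"
  have Thetam: "Theta \<in> measurable (?R \<Otimes>\<^sub>M ?PN) ?R"
  proof -
    have "Theta \<in> measurable (?R \<Otimes>\<^sub>M ?PN) ?Rj" unfolding Theta_def R_def Rj_def by measurable
    then show ?thesis by (simp add: measurable_cong_sets[OF refl setsRj])
  qed
  define X where "X = Theta -` E \<inter> space (?R \<Otimes>\<^sub>M ?PN)"
  have Xm: "X \<in> sets (?R \<Otimes>\<^sub>M ?PN)" unfolding X_def using Thetam Em by (rule measurable_sets)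
  define \<psi> where "\<psi> z = emeasure ?PN (Pair z -` X)" for z
  have \<psi>m: "\<psi> \<in> borel_measurable ?R" unfolding \<psi>_def by (rule PN.measurable_emeasure_Pair[OF Xm])
  have \<psi>1: "\<psi> z \<le> 1" for z unfolding \<psi>_def by (rule PN.emeasure_le_1)
  have key: "emeasure ?Rj E = (\<integral>\<^sup>+z. \<psi> z \<partial>?R)"
  proof -
    have "emeasure ?Rj E = (\<integral>\<^sup>+u. emeasure ?PK (Pair u -` E) \<partial>?U)"
      unfolding Rj_def by (rule PK.emeasure_pair_measure_alt) (use Em' in \<open>simp only: Rj_def\<close>)
    also have "\<dots> = (\<integral>\<^sup>+u. (\<integral>\<^sup>+\<omega>. \<psi> (u, \<omega>) \<partial>?PM) \<partial>?U)"
    proof (rule nn_integral_cong)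
      fix u
      have Eu: "Pair u -` E \<in> sets ?PK" using Em' unfolding Rj_def by (rule sets_Pair1)
      have "emeasure ?PK (Pair u -` E) = emeasure (distr (?PM \<Otimes>\<^sub>M ?PN) ?PK Phi) (Pair u -` E)"
        by (simp only: couple)
      also have "\<dots> = emeasure (?PM \<Otimes>\<^sub>M ?PN) (Phi -` (Pair u -` E) \<inter> space (?PM \<Otimes>\<^sub>M ?PN))"
        by (rule emeasure_distr[OF Phim Eu])
      also have "\<dots> = (\<integral>\<^sup>+\<omega>. emeasure ?PN (Pair \<omega> -` (Phi -` (Pair u -` E) \<inter> space (?PM \<Otimes>\<^sub>M ?PN))) \<partial>?PM)"
        by (rule PN.emeasure_pair_measure_alt) (rule measurable_sets[OF Phim Eu])
      also have "\<dots> = (\<integral>\<^sup>+\<omega>. \<psi> (u, \<omega>) \<partial>?PM)"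
        unfolding \<psi>_def X_def Theta_def
        by (intro nn_integral_cong arg_cong2[where f=emeasure]) (auto simp: space_pair_measure)
      finally show "emeasure ?PK (Pair u -` E) = (\<integral>\<^sup>+\<omega>. \<psi> (u, \<omega>) \<partial>?PM)" .
    qed
    also have "\<dots> = (\<integral>\<^sup>+z. \<psi> z \<partial>?R)"
      unfolding R_def by (rule PM.nn_integral_fst) (use \<psi>m in \<open>simp only: R_def\<close>)
    finally show ?thesis .
  qed
  have \<psi>low: "\<psi> z \<ge> ennreal (r ^ negcnt A p z)" if z: "z \<in> E" for z
  proof -
    obtain u \<omega> where zz: "z = (u, \<omega>)" by (cases z)
    define fh where "fh = final_hist A u (fst \<circ> \<omega>) (snd \<circ> \<omega>)"
    define P where "P = (\<lambda>q::nat \<times> bool. \<not> snd q \<and> fst (\<omega> (fst q)) = p)"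
    define Q where "Q = fst ` set (filter P fh)"
    have termz: "terminates A u (fst \<circ> \<omega>) (snd \<circ> \<omega>)" using z unfolding zz E_def goodset_def by auto
    have finQ: "finite Q" unfolding Q_def by simp
    have cardQ: "card Q \<le> negcnt A p z"
    proof -
      have "card Q \<le> card (set (filter P fh))" unfolding Q_def by (rule card_image_le) simp
      also have "\<dots> \<le> length (filter P fh)" by (rule card_length)
      finally show ?thesis unfolding negcnt_def zz fh_def P_def by simp
    qed
    have lab: "snd q = snd (\<omega> (fst q))" if "q \<in> set fh" for q
      using that hist_labels unfolding fh_def final_hist_def by fastforce
    have sub: "{c. \<forall>i\<in>Q. c i} \<subseteq> Pair z -` X"
    proof
      fix c assume c: "c \<in> {c. \<forall>i\<in>Q. c i}"
      define \<omega>' where "\<omega>' = Phi (\<omega>, c)"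
      have fst': "fst \<circ> \<omega>' = fst \<circ> \<omega>" unfolding \<omega>'_def Phi_def F_def by (auto simp: case_prod_beta)
      have agree: "(snd \<circ> \<omega>') (fst q) = (snd \<circ> \<omega>) (fst q)" if q: "q \<in> set fh" for q
      proof (cases "snd (\<omega> (fst q))")
        case True then show ?thesis unfolding \<omega>'_def Phi_def F_def by (auto simp: case_prod_beta)
      next
        case False
        then have "\<not> snd q" using lab[OF q] by simp
        then have "fst (\<omega> (fst q)) = p \<Longrightarrow> c (fst q)" using c q unfolding Q_def P_def by (cases q) force
        then show ?thesis unfolding \<omega>'_def Phi_def F_def by (auto simp: case_prod_beta)
      qed
      have ra: "terminates A u (fst \<circ> \<omega>) (snd \<circ> \<omega>') \<and> final_hist A u (fst \<circ> \<omega>) (snd \<circ> \<omega>') = fh"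
        using run_agree[OF termz, of "snd \<circ> \<omega>'"] agree unfolding fh_def by blast
      have "(u, \<omega>') \<in> E" using z ra unfolding zz E_def goodset_def fh_def by (auto simp: fst')
      then show "c \<in> Pair z -` X" unfolding X_def Theta_def zz \<omega>'_def by (auto simp: space_pair_measure)
    qed
    have "ennreal (r ^ negcnt A p z) \<le> ennreal (r ^ card Q)"
      using r cardQ by (intro ennreal_leI power_decreasing) auto
    also have "\<dots> = emeasure ?PN {c. \<forall>i\<in>Q. c i}"
      using coin_prob[OF finQ, of r] r by (simp add: ennreal_power)
    also have "\<dots> \<le> \<psi> z" unfolding \<psi>_def
      by (rule emeasure_mono[OF sub sets_Pair1[OF Xm]])
    finally show ?thesis .
  qed
  define \<psi>r where "\<psi>r z = enn2real (\<psi> z)" for z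
  have \<psi>fin: "\<psi> z = ennreal (\<psi>r z)" for z
  proof -
    have "\<psi> z \<noteq> \<top>" using \<psi>1[of z] by (metis ennreal_one_less_top leD top.not_eq_extremum order_le_less_trans)
    then show ?thesis unfolding \<psi>r_def by (metis ennreal_enn2real less_top)
  qed
  have \<psi>rm: "\<psi>r \<in> borel_measurable ?R" unfolding \<psi>r_def using \<psi>m by measurable
  have \<psi>r01: "0 \<le> \<psi>r z \<and> \<psi>r z \<le> 1" for z
    using \<psi>1[of z] unfolding \<psi>fin[of z] by (simp add: \<psi>r_def)
  have int\<psi>r: "integrable ?R \<psi>r"
    by (rule R.integrable_const_bound[where B=1]) (use \<psi>r01 \<psi>rm in auto)
  have "ennreal (integral\<^sup>L ?R \<psi>r) = (\<integral>\<^sup>+z. ennreal (\<psi>r z) \<partial>?R)"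
    using int\<psi>r \<psi>r01 by (intro nn_integral_eq_integral[symmetric]) auto
  also have "\<dots> = emeasure ?Rj E" unfolding key by (simp add: \<psi>fin[symmetric])
  also have "\<dots> = ennreal (measure ?Rj E)" by (simp add: Rj.emeasure_eq_measure)
  also have "\<dots> \<le> ennreal \<delta>" using mE by (rule ennreal_leI)
  finally have I\<psi>: "integral\<^sup>L ?R \<psi>r \<le> \<delta>" using \<delta> by (simp add: ennreal_le_iff)
  have \<psi>rn: "\<psi>r z \<ge> r ^ negcnt A p z" if "z \<in> E" for z
    using \<psi>low[OF that] \<psi>r01[of z] unfolding \<psi>fin[of z] by (simp add: ennreal_le_iff)
  have "\<exists>g. g \<in> borel_measurable ?R \<and> (\<forall>z. 0 \<le> g z) \<and> (\<forall>z\<in>E. g z \<le> real (negcnt A p z)) \<and>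
    (\<integral>\<^sup>+z. indicator E z * ennreal (g z) \<partial>?R) \<ge> ennreal ((1-\<delta>) * ln ((1-\<delta>)/\<delta>) / ln (1/r))"
    by (rule jensen_part[OF R.prob_space_axioms Em \<psi>rm \<psi>r01 I\<psi> pE \<delta> r \<psi>rn])
  then show ?thesis unfolding E_def .
qed


definition pt :: "nat \<Rightarrow> nat \<Rightarrow> real" where "pt J k = real k / real (J + 1)"

definition f0 :: "nat \<Rightarrow> real \<Rightarrow> real \<Rightarrow> nat \<Rightarrow> real" where
  "f0 J \<eta> q i = (if i = 0 then \<eta> else if i \<le> J then q ^ i
     else if i = J + 1 then 1 - \<eta> - (\<Sum>k\<in>{1..J}. q ^ k) else 0)"

definition phi :: "nat \<Rightarrow> nat \<Rightarrow> real \<times> bool" where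
  "phi J i = (if i = 0 then (1, False) else if i \<le> J then (pt J i, False) else (1, True))"

definition D0m :: "nat \<Rightarrow> real \<Rightarrow> real \<Rightarrow> (real \<times> bool) measure" where
  "D0m J \<eta> q = distr (measure_pmf (embed_pmf (f0 J \<eta> q))) (borel \<Otimes>\<^sub>M count_space UNIV) (phi J)"

definition Djm :: "nat \<Rightarrow> real \<Rightarrow> real \<Rightarrow> real \<Rightarrow> nat \<Rightarrow> (real \<times> bool) measure" where
  "Djm J \<eta> q r j = distr (measure_pmf (bernoulli_pmf r) \<Otimes>\<^sub>M D0m J \<eta> q) (borel \<Otimes>\<^sub>M count_space UNIV)
      (\<lambda>(b,(x,y)). (x, y \<or> (\<not> b \<and> x = pt J j)))"

locale dparams =
  fixes J :: nat and \<eta> q :: real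
  assumes \<eta>0: "0 \<le> \<eta>" and q0: "0 \<le> q" and tot: "\<eta> + (\<Sum>k\<in>{1..J}. q ^ k) \<le> 1"
begin

lemma f0_nonneg: "0 \<le> f0 J \<eta> q i"
  unfolding f0_def using \<eta>0 q0 tot by auto

lemma f0_zero: "i \<notin> {0..J+1} \<Longrightarrow> f0 J \<eta> q i = 0"
  unfolding f0_def by auto

lemma f0_total: "(\<Sum>i\<in>{0..J+1}. f0 J \<eta> q i) = 1"
proof -
  have "{0..J+1} = insert 0 (insert (J+1) {1..J})" by auto
  then have "(\<Sum>i\<in>{0..J+1}. f0 J \<eta> q i) = f0 J \<eta> q 0 + (f0 J \<eta> q (J+1) + (\<Sum>i\<in>{1..J}. f0 J \<eta> q i))"
    by (simp add: sum.insert)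
  also have "(\<Sum>i\<in>{1..J}. f0 J \<eta> q i) = (\<Sum>k\<in>{1..J}. q ^ k)"
    by (rule sum.cong) (auto simp: f0_def)
  finally show ?thesis by (simp add: f0_def)
qed

lemma f0_int: "(\<integral>\<^sup>+i. ennreal (f0 J \<eta> q i) \<partial>count_space UNIV) = 1"
proof -
  have "(\<integral>\<^sup>+i. ennreal (f0 J \<eta> q i) \<partial>count_space UNIV) = (\<Sum>i\<in>{0..J+1}. ennreal (f0 J \<eta> q i))"
    by (rule nn_integral_count_space') (auto simp: f0_zero)
  also have "\<dots> = ennreal (\<Sum>i\<in>{0..J+1}. f0 J \<eta> q i)"
    by (intro sum_ennreal f0_nonneg)
  finally show ?thesis by (simp only: f0_total ennreal_1)
qed

definition "P0 = embed_pmf (f0 J \<eta> q)"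

lemma pmf_P0: "pmf P0 i = f0 J \<eta> q i"
  unfolding P0_def by (rule pmf_embed_pmf) (use f0_nonneg f0_int in auto)

lemma measure_P0: "measure (measure_pmf P0) S = (\<Sum>i\<in>S \<inter> {0..J+1}. f0 J \<eta> q i)"
proof -
  have sp: "set_pmf P0 \<subseteq> {0..J+1}"
  proof
    fix x assume "x \<in> set_pmf P0"
    then have "f0 J \<eta> q x \<noteq> 0" by (simp add: set_pmf_iff pmf_P0)
    then show "x \<in> {0..J+1}" using f0_zero by blast
  qed
  have "measure (measure_pmf P0) S = measure (measure_pmf P0) (S \<inter> set_pmf P0)"
    by (simp add: measure_Int_set_pmf)
  also have "S \<inter> set_pmf P0 = (S \<inter> {0..J+1}) \<inter> set_pmf P0" using sp by auto
  also have "measure (measure_pmf P0) \<dots> = measure (measure_pmf P0) (S \<inter> {0..J+1})"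
    by (simp add: measure_Int_set_pmf)
  also have "\<dots> = (\<Sum>i\<in>S \<inter> {0..J+1}. f0 J \<eta> q i)"
    by (subst measure_measure_pmf_finite) (auto simp: pmf_P0)
  finally show ?thesis .
qed

lemma phi_meas: "phi J \<in> measurable (measure_pmf P0) (borel \<Otimes>\<^sub>M count_space UNIV)"
  by (simp add: measurable_cong_sets[OF sets_measure_pmf_count_space refl])

lemma D0m_eq: "D0m J \<eta> q = distr (measure_pmf P0) (borel \<Otimes>\<^sub>M count_space UNIV) (phi J)"
  unfolding D0m_def P0_def ..

lemma D0_prob: "prob_space (D0m J \<eta> q)"
  unfolding D0m_eq by (rule measure_pmf.prob_space_distr) (rule phi_meas)

lemma D0_sets: "sets (D0m J \<eta> q) = sets (borel \<Otimes>\<^sub>M count_space UNIV)"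
  unfolding D0m_eq by simp

lemma measure_D0: "X \<in> sets (borel \<Otimes>\<^sub>M count_space UNIV) \<Longrightarrow>
  measure (D0m J \<eta> q) X = (\<Sum>i\<in>{i\<in>{0..J+1}. phi J i \<in> X}. f0 J \<eta> q i)"
  unfolding D0m_eq
  by (subst measure_distr[OF phi_meas]) (auto simp: measure_P0 intro!: sum.cong)

lemma pt_ge0[simp]: "0 \<le> pt J k"
  unfolding pt_def by simp
lemma pt_le1: "k \<le> J + 1 \<Longrightarrow> pt J k \<le> 1"
  unfolding pt_def by (auto simp: divide_le_eq)

lemma D0_AE: "AE z in D0m J \<eta> q. fst z \<in> {0..1}"
  unfolding D0m_eq
proof (subst AE_distr_iff)
  show "phi J \<in> measurable (measure_pmf P0) (borel \<Otimes>\<^sub>M count_space UNIV)" by (rule phi_meas)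
  show "{x \<in> space (borel \<Otimes>\<^sub>M count_space UNIV). fst x \<in> {0..1::real}} \<in> sets (borel \<Otimes>\<^sub>M count_space UNIV)"
    by measurable
  show "AE x in measure_pmf P0. fst (phi J x) \<in> {0..1}"
    by (auto simp: AE_measure_pmf_iff phi_def pt_le1)
qed

end

lemma pt_less: "i < k \<Longrightarrow> pt J i < pt J k"
  unfolding pt_def by (simp add: divide_strict_right_mono)
lemma pt_lt1: "k \<le> J \<Longrightarrow> pt J k < 1"
  unfolding pt_def by (simp add: divide_less_eq)
lemma pt_inj: "pt J i = pt J k \<Longrightarrow> i = k"
  unfolding pt_def by simp
lemma pt_le_iff: "pt J i \<le> pt J k \<longleftrightarrow> i \<le> k"
  unfolding pt_def by (simp add: divide_le_cancel)

context dparams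
begin

abbreviation "D0 \<equiv> D0m J \<eta> q"

definition "TS a = {z::real\<times>bool. thr a (fst z) \<noteq> snd z}"

lemma TS_meas: "TS a \<in> sets (borel \<Otimes>\<^sub>M count_space UNIV)"
  unfolding TS_def by (rule err_set_meas)

lemma errD0: "err D0 (thr a) = (\<Sum>i\<in>{i\<in>{0..J+1}. thr a (fst (phi J i)) \<noteq> snd (phi J i)}. f0 J \<eta> q i)"
  unfolding err_def using measure_D0[OF err_set_meas[of a]] by simp

definition flipset :: "nat \<Rightarrow> real \<Rightarrow> (real \<times> bool) set" where
  "flipset j a = {v. (fst v, snd v \<or> fst v = pt J j) \<in> TS a}"

lemma flipset_meas: "flipset j a \<in> sets (borel \<Otimes>\<^sub>M count_space UNIV)"
  unfolding flipset_def TS_def thr_def by (rule sets_bc_pred) measurable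

lemma errF: "measure D0 (flipset j a) =
   (\<Sum>i\<in>{i\<in>{0..J+1}. thr a (fst (phi J i)) \<noteq> (snd (phi J i) \<or> fst (phi J i) = pt J j)}. f0 J \<eta> q i)"
  using measure_D0[OF flipset_meas[of j a]] by (simp add: flipset_def TS_def)

lemma sum_ge: "A \<subseteq> {0..J+1} \<Longrightarrow> B \<subseteq> A \<Longrightarrow> (\<Sum>i\<in>B. f0 J \<eta> q i) \<le> (\<Sum>i\<in>A. f0 J \<eta> q i)"
  by (rule sum_mono2) (auto intro: finite_subset f0_nonneg)

lemma sum_le: "A \<subseteq> C \<Longrightarrow> C \<subseteq> {0..J+1} \<Longrightarrow> (\<Sum>i\<in>A. f0 J \<eta> q i) \<le> (\<Sum>i\<in>C. f0 J \<eta> q i)"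
  by (rule sum_mono2) (auto intro: finite_subset f0_nonneg)

lemma E1: "a \<le> 1 \<Longrightarrow> err D0 (thr a) \<ge> \<eta>"
proof -
  assume a: "a \<le> 1"
  have "(\<Sum>i\<in>{0}. f0 J \<eta> q i) \<le> err D0 (thr a)"
    unfolding errD0 by (rule sum_ge) (use a in \<open>auto simp: phi_def thr_def\<close>)
  then show ?thesis by (simp add: f0_def)
qed

lemma E2: "err D0 (thr 1) \<le> \<eta>"
proof -
  have "err D0 (thr 1) \<le> (\<Sum>i\<in>{0}. f0 J \<eta> q i)"
    unfolding errD0 by (rule sum_le) (auto simp: phi_def thr_def pt_le1 dest: pt_lt1 split: if_splits)
  then show ?thesis by (simp add: f0_def)
qed

lemma E3: "1 \<le> J \<Longrightarrow> a \<le> pt J J \<Longrightarrow> err D0 (thr a) \<ge> \<eta> + q ^ J"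
proof -
  assume J: "1 \<le> J" and a: "a \<le> pt J J"
  have a1: "a \<le> 1" using a pt_le1[of J] by linarith
  have "(\<Sum>i\<in>{0, J}. f0 J \<eta> q i) \<le> err D0 (thr a)"
    unfolding errD0 by (rule sum_ge) (use a a1 J in \<open>auto simp: phi_def thr_def\<close>)
  then show ?thesis using J by (simp add: f0_def)
qed

lemma E4: "a \<le> 1 \<Longrightarrow> j \<le> J \<Longrightarrow> measure D0 (flipset j a) \<ge> \<eta>"
proof -
  assume a: "a \<le> 1" and j: "j \<le> J"
  have "(\<Sum>i\<in>{0}. f0 J \<eta> q i) \<le> measure D0 (flipset j a)"
    unfolding errF by (rule sum_ge) (use a j pt_lt1[of j J] in \<open>auto simp: phi_def thr_def\<close>)
  then show ?thesis by (simp add: f0_def)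
qed

lemma E5: "1 \<le> j \<Longrightarrow> j \<le> J \<Longrightarrow> pt J J < a \<Longrightarrow> a \<le> 1 \<Longrightarrow> measure D0 (flipset j a) \<ge> \<eta> + q ^ j"
proof -
  assume j: "1 \<le> j" "j \<le> J" and a: "pt J J < a" "a \<le> 1"
  have "pt J j \<le> pt J J" using j by (simp add: pt_le_iff)
  then have "\<not> a \<le> pt J j" using a by linarith
  then have "(\<Sum>i\<in>{0, j}. f0 J \<eta> q i) \<le> measure D0 (flipset j a)"
    unfolding errF by (intro sum_ge) (use a j pt_lt1[of j J] in \<open>auto simp: phi_def thr_def\<close>)
  then show ?thesis using j by (simp add: f0_def)
qed

lemma E6a: "1 \<le> j \<Longrightarrow> j \<le> J \<Longrightarrow> err D0 (thr (pt J j)) \<le> \<eta> + (\<Sum>k\<in>{j..J}. q ^ k)"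
proof -
  assume j: "1 \<le> j" "j \<le> J"
  have "err D0 (thr (pt J j)) \<le> (\<Sum>i\<in>insert 0 {j..J}. f0 J \<eta> q i)"
    unfolding errD0 by (rule sum_le) (use j in \<open>auto simp: phi_def thr_def pt_le_iff pt_le1 split: if_splits\<close>)
  also have "\<dots> = \<eta> + (\<Sum>k\<in>{j..J}. q ^ k)"
    using j by (auto simp: f0_def intro!: sum.cong)
  finally show ?thesis .
qed

lemma E6b: "1 \<le> j \<Longrightarrow> j \<le> J \<Longrightarrow> measure D0 (flipset j (pt J j)) \<le> \<eta> + (\<Sum>k\<in>{Suc j..J}. q ^ k)"
proof -
  assume j: "1 \<le> j" "j \<le> J"
  have "measure D0 (flipset j (pt J j)) \<le> (\<Sum>i\<in>insert 0 {Suc j..J}. f0 J \<eta> q i)"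
    unfolding errF by (rule sum_le) (use j in \<open>auto simp: phi_def thr_def pt_le_iff pt_le1 not_less_eq_eq dest: pt_inj split: if_splits\<close>)
  also have "\<dots> = \<eta> + (\<Sum>k\<in>{Suc j..J}. q ^ k)"
    using j by (auto simp: f0_def intro!: sum.cong)
  finally show ?thesis .
qed

end

context dparams
begin

lemma D0_valid: "valid_dist D0"
  unfolding valid_dist_def using D0_prob D0_sets D0_AE by blast

lemma Fj_meas: "(\<lambda>(b::bool,(x::real,y::bool)). (x, y \<or> (\<not> b \<and> x = pt J j))) \<in>
   measurable (measure_pmf (bernoulli_pmf r) \<Otimes>\<^sub>M D0) (borel \<Otimes>\<^sub>M count_space UNIV)"
proof -
  have s: "sets (measure_pmf (bernoulli_pmf r) \<Otimes>\<^sub>M D0) = sets (count_space UNIV \<Otimes>\<^sub>M (borel \<Otimes>\<^sub>M count_space UNIV))"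
    by (rule sets_pair_measure_cong) (simp_all add: D0_sets)
  show ?thesis by (simp only: measurable_cong_sets[OF s refl]) measurable
qed

lemma Dj_prob: "prob_space (Djm J \<eta> q r j)"
proof -
  interpret D0: prob_space D0 by (rule D0_prob)
  interpret BD: pair_prob_space "measure_pmf (bernoulli_pmf r)" D0 by unfold_locales
  show ?thesis unfolding Djm_def by (rule BD.prob_space_distr) (rule Fj_meas)
qed

lemma Dj_sets: "sets (Djm J \<eta> q r j) = sets (borel \<Otimes>\<^sub>M count_space UNIV)"
  unfolding Djm_def by simp

lemma Dj_AE: "AE z in Djm J \<eta> q r j. fst z \<in> {0..1}"
proof -
  interpret D0: prob_space D0 by (rule D0_prob)
  interpret BD: pair_prob_space "measure_pmf (bernoulli_pmf r)" D0 by unfold_locales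
  have "AE w in measure_pmf (bernoulli_pmf r) \<Otimes>\<^sub>M D0. fst (snd w) \<in> {0..1}"
  proof (rule BD.AE_pair_measure)
    show "{x \<in> space (measure_pmf (bernoulli_pmf r) \<Otimes>\<^sub>M D0). fst (snd x) \<in> {0..1::real}} \<in> sets (measure_pmf (bernoulli_pmf r) \<Otimes>\<^sub>M D0)"
      using D0_sets by measurable
    show "AE x in measure_pmf (bernoulli_pmf r). AE y in D0. fst (snd (x, y)) \<in> {0..1}"
      using D0_AE by simp
  qed
  then show ?thesis unfolding Djm_def
  proof (subst AE_distr_iff[OF Fj_meas])
    have "{x::real\<times>bool. 0 \<le> fst x \<and> fst x \<le> 1} \<in> sets (borel \<Otimes>\<^sub>M count_space UNIV)"
      by (rule sets_bc_pred) measurable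
    then show "{x \<in> space (borel \<Otimes>\<^sub>M count_space UNIV). fst x \<in> {0..1::real}} \<in> sets (borel \<Otimes>\<^sub>M count_space UNIV)"
      by simp
  qed (use \<open>AE w in _. _\<close> in \<open>auto simp: case_prod_beta\<close>)
qed

lemma Dj_valid: "valid_dist (Djm J \<eta> q r j)"
  unfolding valid_dist_def using Dj_prob Dj_sets Dj_AE by blast

lemma measure_Dj:
  assumes X: "X \<in> sets (borel \<Otimes>\<^sub>M count_space UNIV)" and r: "0 \<le> r" "r \<le> 1"
  shows "measure (Djm J \<eta> q r j) X = r * measure D0 X + (1 - r) * measure D0 {v. (fst v, snd v \<or> fst v = pt J j) \<in> X}"
proof -
  interpret D0: prob_space D0 by (rule D0_prob)
  interpret BD: pair_prob_space "measure_pmf (bernoulli_pmf r)" D0 by unfold_locales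
  interpret Dj: prob_space "Djm J \<eta> q r j" by (rule Dj_prob)
  define F where "F = (\<lambda>(b::bool,(x::real,y::bool)). (x, y \<or> (\<not> b \<and> x = pt J j)))"
  have Fm: "F \<in> measurable (measure_pmf (bernoulli_pmf r) \<Otimes>\<^sub>M D0) (borel \<Otimes>\<^sub>M count_space UNIV)"
    unfolding F_def by (rule Fj_meas)
  have spD0: "space D0 = UNIV" using sets_eq_imp_space_eq[OF D0_sets] by simp
  have Y: "{v. (fst v, snd v \<or> fst v = pt J j) \<in> X} \<in> sets D0"
  proof -
    have "(\<lambda>v::real\<times>bool. (fst v, snd v \<or> fst v = pt J j)) \<in> measurable D0 (borel \<Otimes>\<^sub>M count_space UNIV)"
      using D0_sets by measurable
    from measurable_sets[OF this X] show ?thesis by (simp add: spD0 vimage_def)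
  qed
  have X0: "X \<in> sets D0" using X D0_sets by simp
  have "emeasure (Djm J \<eta> q r j) X = emeasure (measure_pmf (bernoulli_pmf r) \<Otimes>\<^sub>M D0) (F -` X \<inter> space (measure_pmf (bernoulli_pmf r) \<Otimes>\<^sub>M D0))"
    unfolding Djm_def F_def[symmetric] using Fm X by (rule emeasure_distr)
  also have "\<dots> = (\<integral>\<^sup>+b. emeasure D0 (Pair b -` (F -` X \<inter> space (measure_pmf (bernoulli_pmf r) \<Otimes>\<^sub>M D0))) \<partial>measure_pmf (bernoulli_pmf r))"
    by (rule D0.emeasure_pair_measure_alt) (rule measurable_sets[OF Fm X])
  also have "\<dots> = emeasure D0 X * ennreal r + emeasure D0 {v. (fst v, snd v \<or> fst v = pt J j) \<in> X} * ennreal (1 - r)"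
  proof -
    have e1: "Pair True -` (F -` X \<inter> space (measure_pmf (bernoulli_pmf r) \<Otimes>\<^sub>M D0)) = X"
      by (auto simp: F_def space_pair_measure spD0)
    have e2: "Pair False -` (F -` X \<inter> space (measure_pmf (bernoulli_pmf r) \<Otimes>\<^sub>M D0)) = {v. (fst v, snd v \<or> fst v = pt J j) \<in> X}"
      by (auto simp: F_def space_pair_measure spD0 case_prod_beta)
    have "(\<integral>\<^sup>+b. emeasure D0 (Pair b -` (F -` X \<inter> space (measure_pmf (bernoulli_pmf r) \<Otimes>\<^sub>M D0))) \<partial>measure_pmf (bernoulli_pmf r))
      = emeasure D0 (Pair True -` (F -` X \<inter> space (measure_pmf (bernoulli_pmf r) \<Otimes>\<^sub>M D0))) * ennreal r
        + emeasure D0 (Pair False -` (F -` X \<inter> space (measure_pmf (bernoulli_pmf r) \<Otimes>\<^sub>M D0))) * ennreal (1 - r)"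
      by (rule nn_integral_bernoulli_pmf) (use r in auto)
    then show ?thesis by (simp only: e1 e2)
  qed
  also have "\<dots> = ennreal (measure D0 X * r) + ennreal (measure D0 {v. (fst v, snd v \<or> fst v = pt J j) \<in> X} * (1 - r))"
  proof -
    have a1: "emeasure D0 X * ennreal r = ennreal (measure D0 X * r)"
      using r by (simp add: D0.emeasure_eq_measure ennreal_mult'')
    have a2: "emeasure D0 {v. (fst v, snd v \<or> fst v = pt J j) \<in> X} * ennreal (1 - r)
        = ennreal (measure D0 {v. (fst v, snd v \<or> fst v = pt J j) \<in> X} * (1 - r))"
      using r by (simp add: D0.emeasure_eq_measure ennreal_mult'')
    show ?thesis by (simp only: a1 a2)
  qed
  also have "\<dots> = ennreal (measure D0 X * r + measure D0 {v. (fst v, snd v \<or> fst v = pt J j) \<in> X} * (1 - r))"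
    by (rule ennreal_plus[symmetric]) (use r in simp_all)
  also have "\<dots> = ennreal (r * measure D0 X + (1 - r) * measure D0 {v. (fst v, snd v \<or> fst v = pt J j) \<in> X})"
    by (simp only: mult.commute)
  finally have fin: "ennreal (measure (Djm J \<eta> q r j) X) = ennreal (r * measure D0 X + (1 - r) * measure D0 {v. (fst v, snd v \<or> fst v = pt J j) \<in> X})"
    by (simp add: Dj.emeasure_eq_measure)
  have nn: "0 \<le> r * measure D0 X + (1 - r) * measure D0 {v. (fst v, snd v \<or> fst v = pt J j) \<in> X}"
    using r by (intro add_nonneg_nonneg mult_nonneg_nonneg) auto
  show ?thesis using fin nn by (subst (asm) ennreal_inj) auto
qed

lemma errDj: "0 \<le> r \<Longrightarrow> r \<le> 1 \<Longrightarrow>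
   err (Djm J \<eta> q r j) (thr a) = r * err D0 (thr a) + (1 - r) * measure D0 (flipset j a)"
  unfolding err_def using measure_Dj[OF err_set_meas[of a]]
  by (simp add: flipset_def TS_def)

end

lemma err_H_le: "valid_dist D \<Longrightarrow> a \<in> {0..1} \<Longrightarrow> err_H D \<le> err D (thr a)"
  unfolding err_H_def err_def by (rule cINF_lower) (auto intro: bdd_belowI[where m=0])

lemma err_H_ge: "(\<And>a. a \<in> {0..1} \<Longrightarrow> c \<le> err D (thr a)) \<Longrightarrow> c \<le> err_H D"
  unfolding err_H_def by (rule cINF_greatest) auto


lemma numeric:
  fixes \<alpha> \<eta> K \<beta> :: real and J :: nat
  assumes K: "K = 8 * (1 + \<alpha>)" and \<beta>: "\<beta> = K + 1" and \<alpha>: "\<alpha> \<ge> 0"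
    and \<eta>: "0 < \<eta>" "\<eta> \<le> 1 / (K^2 * \<beta>^2)"
    and J: "J = nat \<lfloor>ln (1 / (K * \<eta>)) / ln \<beta>\<rfloor>"
  shows "1 \<le> J" "real J \<ge> ln (1/\<eta>) / (2 * ln \<beta>)" "(1/\<beta>) ^ J \<ge> K * \<eta>"
proof -
  have K8: "K \<ge> 8" using K \<alpha> by simp
  have \<beta>9: "\<beta> \<ge> 9" using K8 \<beta> by simp
  have lK: "ln K > 0" using K8 by simp
  have l\<beta>: "ln \<beta> > 0" using \<beta>9 by simp
  have Kpos: "K > 0" using K8 by simp
  have \<beta>pos: "\<beta> > 0" using \<beta>9 by simp
  have "ln (1/\<eta>) \<ge> ln (K^2 * \<beta>^2)"
  proof -
    have "K^2 * \<beta>^2 \<le> 1/\<eta>" using \<eta> Kpos \<beta>pos by (simp add: field_simps)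
    moreover have "0 < K^2 * \<beta>^2" using Kpos \<beta>pos by simp
    ultimately show ?thesis using ln_le_cancel_iff[of "K^2*\<beta>^2" "1/\<eta>"] \<eta>(1) by simp
  qed
  then have le1: "ln (1/\<eta>) \<ge> 2 * ln K + 2 * ln \<beta>"
    using Kpos \<beta>pos by (simp add: ln_mult ln_realpow)
  define y where "y = ln (1 / (K * \<eta>)) / ln \<beta>"
  have lnKe: "ln (1 / (K * \<eta>)) = ln (1/\<eta>) - ln K"
    using Kpos \<eta> by (simp add: ln_div ln_mult)
  have y0: "y \<ge> 0" unfolding y_def using lnKe le1 lK l\<beta> by simp
  have Jy: "real J \<le> y" "y - 1 < real J" unfolding J y_def[symmetric] using y0 by linarith+
  have "y - 1 = (ln (1/\<eta>) - ln K - ln \<beta>) / ln \<beta>" unfolding y_def lnKe using l\<beta> by (simp add: field_simps)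
  also have "\<dots> \<ge> (ln (1/\<eta>) / 2) / ln \<beta>" using le1 lK l\<beta> by (intro divide_right_mono) auto
  finally have "(ln (1/\<eta>) / 2) / ln \<beta> \<le> real J" using Jy by linarith
  then show J2: "real J \<ge> ln (1/\<eta>) / (2 * ln \<beta>)" by (simp add: field_simps)
  have "ln (1/\<eta>) / (2 * ln \<beta>) \<ge> (2 * ln \<beta>) / (2 * ln \<beta>)"
    using le1 lK l\<beta> by (intro divide_right_mono) auto
  then have "ln (1/\<eta>) / (2 * ln \<beta>) \<ge> 1" using l\<beta> by simp
  then show "1 \<le> J" using J2 by linarith
  have "real J * ln \<beta> \<le> ln (1 / (K * \<eta>))" using Jy(1) l\<beta> unfolding y_def by (simp add: le_divide_eq)
  then have "ln (\<beta> ^ J) \<le> ln (1 / (K * \<eta>))" using \<beta>pos by (simp add: ln_realpow)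
  then have "\<beta> ^ J \<le> 1 / (K * \<eta>)" using \<beta>pos Kpos \<eta> by simp
  then show "(1/\<beta>) ^ J \<ge> K * \<eta>" using \<beta>pos Kpos \<eta> by (simp add: power_one_over field_simps)
qed

lemma geo_tail:
  fixes q :: real assumes "0 \<le> q" "q < 1"
  shows "(\<Sum>k\<in>{Suc j..J}. q ^ k) \<le> q ^ Suc j / (1 - q)"
proof -
  have "(\<Sum>k\<in>{Suc j..J}. q ^ k) = (if J < Suc j then 0 else (q ^ Suc j - q ^ Suc J) / (1 - q))"
    using assms by (simp add: sum_gp)
  also have "\<dots> \<le> q ^ Suc j / (1 - q)"
    using assms by (auto intro!: divide_right_mono)
  finally show ?thesis .
qed

lemma count_split:
  assumes "finite Js" "inj_on h Js"
  shows "(\<Sum>j\<in>Js. length (filter (\<lambda>x. P x \<and> g x = h j) l)) \<le> length (filter P l)"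
proof (induction l)
  case Nil then show ?case by simp
next
  case (Cons x l)
  have c: "(\<Sum>j\<in>Js. (if P x \<and> g x = h j then 1 else 0 :: nat)) \<le> (if P x then 1 else 0)"
  proof -
    have "(\<Sum>j\<in>Js. (if P x \<and> g x = h j then 1 else 0 :: nat)) = card {j\<in>Js. P x \<and> g x = h j}"
      using assms(1) by (simp add: sum.If_cases Int_def)
    also have "\<dots> \<le> (if P x then 1 else 0)"
    proof (cases "P x")
      case True
      have "card {j\<in>Js. P x \<and> g x = h j} \<le> Suc 0" using assms
        by (subst card_le_Suc0_iff_eq) (auto simp: inj_on_def)
      then show ?thesis using True by simp
    qed simp
    finally show ?thesis .
  qed
  have "(\<Sum>j\<in>Js. length (filter (\<lambda>x. P x \<and> g x = h j) (x # l)))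
      = (\<Sum>j\<in>Js. length (filter (\<lambda>x. P x \<and> g x = h j) l)) + (\<Sum>j\<in>Js. (if P x \<and> g x = h j then 1 else 0))"
    by (simp add: sum.distrib[symmetric]) (intro sum.cong, auto)
  also have "\<dots> \<le> length (filter P l) + (if P x then 1 else 0)"
    using Cons c by (rule add_mono)
  also have "\<dots> = length (filter P (x # l))" by simp
  finally show ?case .
qed


theorem theorem2:
  fixes \<alpha> :: real
  assumes "\<alpha> \<ge> 0"
  shows "\<exists>c > 0. \<exists>\<eta>0 \<in> {0<..<1}. \<forall>\<eta>_min \<delta> (A :: auditor).
           0 < \<eta>_min \<and> \<eta>_min \<le> \<eta>0 \<and> 0 < \<delta> \<and> \<delta> < 1 \<and>
           (\<forall>D. valid_dist D \<and> err_H D \<ge> \<eta>_min \<longrightarrow> learns \<alpha> \<delta> A D) \<longrightarrow>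
           (\<exists>D. valid_dist D \<and> err_H D \<ge> \<eta>_min \<and>
                expected_audit_cost A D \<ge> ennreal (c * ln ((1 - \<delta>) / \<delta>) * ln (1 / \<eta>_min)))"
proof -
  note \<alpha> = assms
  define K where "K = 8 * (1 + \<alpha>)"
  define \<beta> where "\<beta> = K + 1"
  define q where "q = 1 / \<beta>"
  define r where "r = 1 / K"
  define c where "c = 1 / (4 * ln K * ln \<beta>)"
  define \<eta>0 where "\<eta>0 = 1 / (K^2 * \<beta>^2)"
  have K8: "K \<ge> 8" unfolding K_def using \<alpha> by simp
  have \<beta>9: "\<beta> \<ge> 9" unfolding \<beta>_def using K8 by simp
  have lK: "ln K > 0" using K8 by simp
  have l\<beta>: "ln \<beta> > 0" using \<beta>9 by simp
  have cpos: "c > 0" unfolding c_def using lK l\<beta> by simp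
  have qb: "0 < q" "q < 1" "q \<le> 1" unfolding q_def using \<beta>9 by auto
  have r0: "0 < r" "r < 1" "r \<le> 1/8" unfolding r_def using K8 by (auto simp: divide_le_eq)
  have \<eta>0b: "\<eta>0 \<le> 1/2" "0 < \<eta>0"
  proof -
    have "K^2 * \<beta>^2 \<ge> 8^2 * 9^2" using K8 \<beta>9 by (intro mult_mono power_mono) auto
    then have "K^2 * \<beta>^2 \<ge> 2" by simp
    then show "\<eta>0 \<le> 1/2" "0 < \<eta>0" unfolding \<eta>0_def by (auto simp: field_simps)
  qed
  have qK: "q / (1 - q) = 1 / K" unfolding q_def \<beta>_def using K8 by (simp add: field_simps)
  have main: "\<exists>D. valid_dist D \<and> err_H D \<ge> \<eta> \<and>
                expected_audit_cost A D \<ge> ennreal (c * ln ((1 - \<delta>) / \<delta>) * ln (1 / \<eta>))"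
    if \<eta>: "0 < \<eta>" "\<eta> \<le> \<eta>0" and \<delta>: "0 < \<delta>" "\<delta> < 1"
      and H: "\<forall>D. valid_dist D \<and> err_H D \<ge> \<eta> \<longrightarrow> learns \<alpha> \<delta> A D" for \<eta> \<delta> A
  proof -
    define J where "J = nat \<lfloor>ln (1 / (K * \<eta>)) / ln \<beta>\<rfloor>"
    have \<eta>' : "\<eta> \<le> 1 / (K^2 * \<beta>^2)" using \<eta> unfolding \<eta>0_def by simp
    note num = numeric[OF K_def \<beta>_def \<alpha> \<eta>(1) \<eta>' J_def]
    have J1: "1 \<le> J" by (rule num(1))
    have J2: "real J \<ge> ln (1/\<eta>) / (2 * ln \<beta>)" by (rule num(2))
    have J3: "q ^ J \<ge> K * \<eta>" unfolding q_def by (rule num(3))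
    have geo: "(\<Sum>k\<in>{Suc j..J}. q ^ k) \<le> q ^ j / K" for j
    proof -
      have "(\<Sum>k\<in>{Suc j..J}. q ^ k) \<le> q ^ Suc j / (1 - q)" using qb by (intro geo_tail) auto
      also have "\<dots> = q ^ j * (q / (1 - q))" by simp
      finally show ?thesis using qK by simp
    qed
    have tot: "\<eta> + (\<Sum>k\<in>{1..J}. q ^ k) \<le> 1"
    proof -
      have "(\<Sum>k\<in>{1..J}. q ^ k) \<le> 1 / K" using geo[of 0] by simp
      also have "\<dots> \<le> 1/8" using K8 by (simp add: divide_le_eq)
      finally show ?thesis using \<eta> \<eta>0b by linarith
    qed
    interpret dparams J \<eta> q by unfold_locales (use \<eta> qb tot in auto)
    have errH0: "err_H D0 \<ge> \<eta>" by (rule err_H_ge) (use E1 in auto)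
    have errH0le: "err_H D0 \<le> \<eta>" using err_H_le[OF D0_valid, of 1] E2 by simp
    have errHj: "err_H (Djm J \<eta> q r j) \<ge> \<eta>" if j: "j \<in> {1..J}" for j
    proof (rule err_H_ge)
      fix a :: real assume a: "a \<in> {0..1}"
      have "r * \<eta> + (1 - r) * \<eta> \<le> r * err D0 (thr a) + (1 - r) * measure D0 (flipset j a)"
        using E1[of a] E4[of a j] a j r0 by (intro add_mono mult_left_mono) auto
      then show "\<eta> \<le> err (Djm J \<eta> q r j) (thr a)" using errDj[of r j a] r0 by (simp add: algebra_simps)
    qed
    have L0: "learns \<alpha> \<delta> A D0" using H D0_valid errH0 by blast
    have Lj: "learns \<alpha> \<delta> A (Djm J \<eta> q r j)" if "j \<in> {1..J}" for j
      using H Dj_valid errHj[OF that] by blast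
    show ?thesis
    proof (cases "\<delta> < 1/2")
      case False
      have "(1 - \<delta>) / \<delta> \<le> 1" using False \<delta> by (simp add: divide_le_eq)
      then have "ln ((1 - \<delta>) / \<delta>) \<le> 0" using \<delta> by simp
      moreover have "ln (1/\<eta>) \<ge> 0" using \<eta> \<eta>0b by (simp add: divide_le_eq)
      ultimately have "c * ln ((1 - \<delta>) / \<delta>) * ln (1 / \<eta>) \<le> 0" using cpos
        by (meson mult_nonneg_nonpos mult_nonpos_nonneg less_imp_le)
      then have "ennreal (c * ln ((1 - \<delta>) / \<delta>) * ln (1 / \<eta>)) = 0" by (simp add: ennreal_eq_0_iff)
      then show ?thesis using D0_valid errH0 by (intro exI[of _ D0]) simp
    next
      case True
      have \<delta>': "0 < \<delta>" "\<delta> \<le> 1/2" using \<delta> True by auto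
      have disj: False
        if j: "j \<in> {1..J}" and a: "a \<in> {0..1}"
          and h0: "err D0 (thr a) \<le> (1+\<alpha>) * err_H D0"
          and hj: "err (Djm J \<eta> q r j) (thr a) \<le> (1+\<alpha>) * err_H (Djm J \<eta> q r j)" for j a
      proof -
        have j1: "1 \<le> j" "j \<le> J" using j by auto
        have e0: "err D0 (thr a) \<le> (1+\<alpha>) * \<eta>"
          using h0 errH0le \<alpha> by (meson add_nonneg_nonneg mult_left_mono order_trans zero_le_one)
        have agt: "pt J J < a"
        proof (rule ccontr)
          assume "\<not> pt J J < a"
          then have "\<eta> + q ^ J \<le> err D0 (thr a)" using E3[OF J1] by simp
          then have "\<eta> + K * \<eta> \<le> (1 + \<alpha>) * \<eta>" using J3 e0 by linarith
          then have "K * \<eta> \<le> \<alpha> * \<eta>" by (simp add: algebra_simps)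
          then have "K \<le> \<alpha>" using \<eta> by simp
          then show False unfolding K_def using \<alpha> by simp
        qed
        define t where "t = q ^ j"
        define S where "S = (\<Sum>k\<in>{Suc j..J}. q ^ k)"
        have tpos: "t > 0" unfolding t_def using qb by simp
        have St: "S \<le> t / K" unfolding S_def t_def by (rule geo)
        have \<eta>t: "\<eta> \<le> t / K"
        proof -
          have "q ^ J \<le> q ^ j" using qb j1 by (intro power_decreasing) auto
          then have "K * \<eta> \<le> t" using J3 unfolding t_def by linarith
          then show ?thesis using K8 by (simp add: field_simps)
        qed
        have lo: "err (Djm J \<eta> q r j) (thr a) \<ge> \<eta> + (1 - r) * t"
        proof -
          have "r * \<eta> + (1 - r) * (\<eta> + t) \<le> r * err D0 (thr a) + (1 - r) * measure D0 (flipset j a)"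
            using E1[of a] E5[OF j1 agt] a r0 unfolding t_def by (intro add_mono mult_left_mono) auto
          then show ?thesis using errDj[of r j a] r0 by (simp add: algebra_simps)
        qed
        have up: "err_H (Djm J \<eta> q r j) \<le> \<eta> + r * t + S"
        proof -
          have p01: "pt J j \<in> {0..1}" using j1 by (auto intro: pt_le1)
          have "err_H (Djm J \<eta> q r j) \<le> err (Djm J \<eta> q r j) (thr (pt J j))"
            by (rule err_H_le[OF Dj_valid p01])
          also have "\<dots> = r * err D0 (thr (pt J j)) + (1 - r) * measure D0 (flipset j (pt J j))"
            using r0 by (intro errDj) auto
          also have "\<dots> \<le> r * (\<eta> + (\<Sum>k\<in>{j..J}. q ^ k)) + (1 - r) * (\<eta> + S)"
            using E6a[OF j1] E6b[OF j1] r0 unfolding S_def by (intro add_mono mult_left_mono) auto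
          also have "(\<Sum>k\<in>{j..J}. q ^ k) = t + S"
          proof -
            have "{j..J} = insert j {Suc j..J}" using j1 by auto
            then show ?thesis unfolding t_def S_def by simp
          qed
          finally show ?thesis by (simp add: algebra_simps)
        qed
        have rt: "r * t = t / K" unfolding r_def by simp
        have "\<eta> + r * t + S \<le> 3 * (t / K)"
          using \<eta>t St rt by linarith
        then have "\<eta> + r * t + S \<le> 3 * t / K" by simp
        then have "(1 + \<alpha>) * (\<eta> + r * t + S) \<le> (1 + \<alpha>) * (3 * t / K)"
          using \<alpha> by (intro mult_left_mono) auto
        also have "(1 + \<alpha>) * (3 * t / K) = 3 * t / 8" unfolding K_def using \<alpha> by (simp add: field_simps)
        finally have A1: "(1 + \<alpha>) * err_H (Djm J \<eta> q r j) \<le> 3 * t / 8"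
          using up \<alpha> by (meson add_nonneg_nonneg mult_left_mono order_trans zero_le_one)
        have "(1 - r) * t \<ge> 7 * t / 8" using r0 tpos by (simp add: field_simps)
        then show False using lo hj A1 tpos \<eta> by linarith
      qed
      define E where "E = goodset \<alpha> A D0"
      define B0 where "B0 = (1 - \<delta>) * ln ((1 - \<delta>) / \<delta>) / ln (1 / r)"
      have ex: "\<exists>g. g \<in> borel_measurable (run_space D0) \<and> (\<forall>z. 0 \<le> g z) \<and>
          (\<forall>z\<in>E. g z \<le> real (negcnt A (pt J j) z)) \<and>
          (\<integral>\<^sup>+z. indicator E z * ennreal (g z) \<partial>run_space D0) \<ge> ennreal B0"
        if j: "j \<in> {1..J}" for j
        unfolding E_def B0_def
      proof (rule core[OF D0_prob D0_sets r0(1,2) _ L0 Lj[OF j] _ \<delta>'])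
        show "Djm J \<eta> q r j = distr (measure_pmf (bernoulli_pmf r) \<Otimes>\<^sub>M D0) (borel \<Otimes>\<^sub>M count_space UNIV)
                   (\<lambda>(b,(x,y)). (x, y \<or> (\<not> b \<and> x = pt J j)))" unfolding Djm_def ..
      qed (rule disj[OF j]; assumption)
      then have "\<forall>j\<in>{1..J}. \<exists>g. g \<in> borel_measurable (run_space D0) \<and> (\<forall>z. 0 \<le> g z) \<and>
          (\<forall>z\<in>E. g z \<le> real (negcnt A (pt J j) z)) \<and>
          (\<integral>\<^sup>+z. indicator E z * ennreal (g z) \<partial>run_space D0) \<ge> ennreal B0" by blast
      from bchoice[OF this] obtain G where G: "\<forall>j\<in>{1..J}. G j \<in> borel_measurable (run_space D0) \<and> (\<forall>z. 0 \<le> G j z) \<and>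
          (\<forall>z\<in>E. G j z \<le> real (negcnt A (pt J j) z)) \<and>
          (\<integral>\<^sup>+z. indicator E z * ennreal (G j z) \<partial>run_space D0) \<ge> ennreal B0"
        by blast
      have Gm: "G j \<in> borel_measurable (run_space D0)" if "j \<in> {1..J}" for j using G that by blast
      have Em: "E \<in> sets (run_space D0)"
      proof (rule ccontr)
        assume "E \<notin> sets (run_space D0)" then have "measure (run_space D0) E = 0" by (rule measure_notin_sets)
        moreover have "measure (run_space D0) E \<ge> 1 - \<delta>" using L0 unfolding learns_iff E_def .
        ultimately show False using \<delta> by simp
      qed
      have pw: "(\<Sum>j\<in>{1..J}. indicator E z * ennreal (G j z)) \<le> (case z of (u, \<omega>) \<Rightarrow> audit_cost A u (fst \<circ> \<omega>) (snd \<circ> \<omega>))" for z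
      proof (cases "z \<in> E")
        case False then show ?thesis by simp
      next
        case True
        obtain u \<omega> where zz: "z = (u, \<omega>)" by (cases z)
        define fh where "fh = final_hist A u (fst \<circ> \<omega>) (snd \<circ> \<omega>)"
        have cs: "(\<Sum>j\<in>{1..J}. negcnt A (pt J j) z) \<le> length (filter (\<lambda>p. \<not> snd p) fh)"
          unfolding negcnt_def zz fh_def
          using count_split[of "{1..J}" "pt J" "\<lambda>p. \<not> snd p" "\<lambda>q. fst (\<omega> (fst q))"]
          by (simp add: inj_on_def pt_inj)
        have "(\<Sum>j\<in>{1..J}. indicator E z * ennreal (G j z)) = (\<Sum>j\<in>{1..J}. ennreal (G j z))"
          using True by simp
        also have "\<dots> \<le> (\<Sum>j\<in>{1..J}. ennreal (real (negcnt A (pt J j) z)))"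
          using G True by (intro sum_mono ennreal_leI) auto
        also have "\<dots> = ennreal (\<Sum>j\<in>{1..J}. real (negcnt A (pt J j) z))"
          by (rule sum_ennreal) simp
        also have "\<dots> \<le> ennreal (real (length (filter (\<lambda>p. \<not> snd p) fh)))"
          using cs by (intro ennreal_leI) (simp flip: of_nat_sum)
        also have "\<dots> \<le> audit_cost A u (fst \<circ> \<omega>) (snd \<circ> \<omega>)"
          unfolding fh_def by (rule audit_cost_ge)
        finally show ?thesis unfolding zz by simp
      qed
      have ell: "ln ((1 - \<delta>) / \<delta>) \<ge> 0"
      proof -
        have "1 \<le> (1 - \<delta>) / \<delta>" using \<delta>' by (simp add: field_simps)
        then show ?thesis by simp
      qed
      have B0nn: "B0 \<ge> 0" unfolding B0_def using ell \<delta> r0 by (simp add: divide_nonneg_nonneg)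
      have real_ineq: "c * ln ((1 - \<delta>) / \<delta>) * ln (1 / \<eta>) \<le> real J * B0"
      proof -
        have lnr: "ln (1 / r) = ln K" unfolding r_def by simp
        have "ln (1/\<eta>) / (2 * ln \<beta>) * (1/2) \<le> real J * (1 - \<delta>)"
          using J2 \<delta>' by (intro mult_mono) auto
        then have "ln (1/\<eta>) / (2 * ln \<beta>) * (1/2) * (ln ((1 - \<delta>) / \<delta>) / ln K) \<le> real J * (1 - \<delta>) * (ln ((1 - \<delta>) / \<delta>) / ln K)"
          using ell lK by (intro mult_right_mono) auto
        moreover have "c * ln ((1 - \<delta>) / \<delta>) * ln (1 / \<eta>) = ln (1/\<eta>) / (2 * ln \<beta>) * (1/2) * (ln ((1 - \<delta>) / \<delta>) / ln K)"
          unfolding c_def using lK l\<beta> by (simp add: field_simps)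
        moreover have "real J * B0 = real J * (1 - \<delta>) * (ln ((1 - \<delta>) / \<delta>) / ln K)"
          unfolding B0_def lnr by simp
        ultimately show ?thesis by simp
      qed
      have "ennreal (c * ln ((1 - \<delta>) / \<delta>) * ln (1 / \<eta>)) \<le> ennreal (real J * B0)"
        using real_ineq by (rule ennreal_leI)
      also have "ennreal (real J * B0) = (\<Sum>j\<in>{1..J}. ennreal B0)"
        using sum_ennreal[of "{1..J}" "\<lambda>_. B0"] B0nn by simp
      also have "\<dots> \<le> (\<Sum>j\<in>{1..J}. \<integral>\<^sup>+z. indicator E z * ennreal (G j z) \<partial>run_space D0)"
        using G by (intro sum_mono) auto
      also have "\<dots> = (\<integral>\<^sup>+z. (\<Sum>j\<in>{1..J}. indicator E z * ennreal (G j z)) \<partial>run_space D0)"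
      proof (rule nn_integral_sum[symmetric])
        fix j assume j: "j \<in> {1..J}"
        note [measurable] = Gm[OF j] Em
        show "(\<lambda>z. indicator E z * ennreal (G j z)) \<in> borel_measurable (run_space D0)" by measurable
      qed
      also have "\<dots> \<le> expected_audit_cost A D0"
        unfolding expected_audit_cost_def by (rule nn_integral_mono) (rule pw)
      finally show ?thesis using D0_valid errH0 by blast
    qed
  qed
  have allm: "\<forall>\<eta> \<delta> (A :: auditor). 0 < \<eta> \<and> \<eta> \<le> \<eta>0 \<and> 0 < \<delta> \<and> \<delta> < 1 \<and>
           (\<forall>D. valid_dist D \<and> err_H D \<ge> \<eta> \<longrightarrow> learns \<alpha> \<delta> A D) \<longrightarrow>
           (\<exists>D. valid_dist D \<and> err_H D \<ge> \<eta> \<and>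
                expected_audit_cost A D \<ge> ennreal (c * ln ((1 - \<delta>) / \<delta>) * ln (1 / \<eta>)))"
    using main by blast
  have "\<eta>0 \<in> {0<..<1}" using \<eta>0b by auto
  then show ?thesis using cpos allm by blast
qed


end
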